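(* Model (LP) (defined in the context) is equivalent to model (MIP): the optimal objective values of (LP) and (MIP) coincide, and every optimal solution $(\lambda^*,\mathbf{s}^{-*},\mathbf{s}^{+*},\delta^*,\boldsymbol{\alpha}^*,\gamma^* )$ of (LP) satisfies $\gamma^*=1$ and $\alpha^*_j\in\{0,1\}$ for all $j$, so that it is an optimal solution of (MIP).
   Context: Data envelopment analysis setting. There are $n$ decision making units (DMUs) indexed by $J=\{1,\dots,n\}$, each using $m$ inputs to produce $s$ outputs; DMU$_j$ has input vector $\mathbf{x}_j=(x_{1j},\dots,x_{mj})^T\in\mathbb{R}^m_+$ and output vector $\mathbf{y}_j=(y_{1j},\dots,y_{sj})^T\in\mathbb{R}^s_+$; $\mathbf{X}=[\mathbf{x}_1\cdots\mathbf{x}_n]$, $\mathbf{Y}=[\mathbf{y}_1\cdots\mathbf{y}_n]$. Define $\mathbf{R}^-=(R^-_1,\dots,R^-_m)^T$, $\mathbf{R}^+=(R^+_1,\dots,R^+_s)^T$ by $1/R^-_i=\max_{j}x_{ij}-\min_j x_{ij}$ and $1/R^+_r=\max_j y_{rj}-\min_j y_{rj}$. For $o\in J$, the RAM model is: $\rho_o=\min\, 1-\frac{1}{m+s}(\mathbf{R}^{-T}\mathbf{s}^-+\mathbf{R}^{+T}\mathbf{s}^+)$ subject to $\mathbf{X}\lambda+\mathbf{s}^-=\mathbf{x}_o$, $\mathbf{Y}\lambda-\mathbf{s}^+=\mathbf{y}_o$, $\mathbf{1}^T\lambda=1$, $\lambda\ge 0,\mathbf{s}^-\ge0,\mathbf{s}^+\ge0$.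 A DMU is RAM-efficient if its optimal value $\rho$ equals $1$; let $E\subseteq J$ be the index set of RAM-efficient DMUs and $\mathbf{X}_E,\mathbf{Y}_E$ the submatrices of $\mathbf{X},\mathbf{Y}$ with columns in $E$. Fix the evaluated DMU $o\in J$. Model (MIP): maximize $\mathbf{1}^T\boldsymbol{\alpha}+\gamma$ over $\lambda\in\mathbb{R}^{|E|}$, $\mathbf{s}^-\in\mathbb{R}^m$, $\mathbf{s}^+\in\mathbb{R}^s$, $\delta\in\mathbb{R}$, $\boldsymbol{\alpha}\in\{0,1\}^{|E|}$, $\gamma\in\{0,1\}$ subject to $\mathbf{X}_E\lambda+\mathbf{s}^--\mathbf{x}_o\delta=\mathbf{0}$, $\mathbf{Y}_E\lambda-\mathbf{s}^+-\mathbf{y}_o\delta=\mathbf{0}$, $\mathbf{1}^T\lambda-\delta=0$, $\mathbf{R}^{-T}\mathbf{s}^-+\mathbf{R}^{+T}\mathbf{s}^+-(m+s)(1-\rho_o)\delta=0$, $\boldsymbol{\alpha}\le\lambda$, $\gamma\le\delta$, $\lambda\ge\mathbf{0}$, $\mathbf{s}^-\ge\mathbf{0}$, $\mathbf{s}^+\ge\mathbf{0}$, $\delta\ge0$. Model (LP): the same as (MIP) except that the binary requirements are replaced by $\mathbf{0}\le\boldsymbol{\alpha}\le\mathbf{1}$ (with $\boldsymbol{\alpha}\in\mathbb{R}^{|E|}$) and $0\le\gamma\le1$ (with $\gamma\in\mathbb{R}$). *)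

theory Defs
  imports Complex_Main
begin

text \<open>Data: x i j = input i of DMU j (i < m), y r j = output r of DMU j (r < s),
  DMUs j < n.  Vectors are functions on nat; only the indicated ranges matter.\<close>

definition range_weight :: "(nat \<Rightarrow> nat \<Rightarrow> real) \<Rightarrow> nat \<Rightarrow> nat \<Rightarrow> real" where
  "range_weight v n i =
     1 / (Max ((\<lambda>j. v i j) ` {..<n}) - Min ((\<lambda>j. v i j) ` {..<n}))"

definition ram_feasible ::
  "(nat \<Rightarrow> nat \<Rightarrow> real) \<Rightarrow> (nat \<Rightarrow> nat \<Rightarrow> real) \<Rightarrow> nat \<Rightarrow> nat \<Rightarrow> nat \<Rightarrow> nat
   \<Rightarrow> (nat \<Rightarrow> real) \<Rightarrow> (nat \<Rightarrow> real) \<Rightarrow> (nat \<Rightarrow> real) \<Rightarrow> bool" where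
  "ram_feasible x y n m s k lam sm sp \<longleftrightarrow>
     (\<forall>i<m. (\<Sum>j<n. x i j * lam j) + sm i = x i k) \<and>
     (\<forall>r<s. (\<Sum>j<n. y r j * lam j) - sp r = y r k) \<and>
     (\<Sum>j<n. lam j) = 1 \<and>
     (\<forall>j<n. lam j \<ge> 0) \<and> (\<forall>i<m. sm i \<ge> 0) \<and> (\<forall>r<s. sp r \<ge> 0)"

definition weighted_slack ::
  "(nat \<Rightarrow> nat \<Rightarrow> real) \<Rightarrow> (nat \<Rightarrow> nat \<Rightarrow> real) \<Rightarrow> nat \<Rightarrow> nat \<Rightarrow> nat
   \<Rightarrow> (nat \<Rightarrow> real) \<Rightarrow> (nat \<Rightarrow> real) \<Rightarrow> real" where
  "weighted_slack x y n m s sm sp =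
     (\<Sum>i<m. range_weight x n i * sm i) + (\<Sum>r<s. range_weight y n r * sp r)"

definition ram_obj ::
  "(nat \<Rightarrow> nat \<Rightarrow> real) \<Rightarrow> (nat \<Rightarrow> nat \<Rightarrow> real) \<Rightarrow> nat \<Rightarrow> nat \<Rightarrow> nat
   \<Rightarrow> (nat \<Rightarrow> real) \<Rightarrow> (nat \<Rightarrow> real) \<Rightarrow> real" where
  "ram_obj x y n m s sm sp = 1 - weighted_slack x y n m s sm sp / real (m + s)"

definition ram_rho ::
  "(nat \<Rightarrow> nat \<Rightarrow> real) \<Rightarrow> (nat \<Rightarrow> nat \<Rightarrow> real) \<Rightarrow> nat \<Rightarrow> nat \<Rightarrow> nat \<Rightarrow> nat \<Rightarrow> real" where
  "ram_rho x y n m s k =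
     Inf {ram_obj x y n m s sm sp | lam sm sp. ram_feasible x y n m s k lam sm sp}"

definition eff_set ::
  "(nat \<Rightarrow> nat \<Rightarrow> real) \<Rightarrow> (nat \<Rightarrow> nat \<Rightarrow> real) \<Rightarrow> nat \<Rightarrow> nat \<Rightarrow> nat \<Rightarrow> nat set" where
  "eff_set x y n m s = {j. j < n \<and> ram_rho x y n m s j = 1}"

text \<open>Common constraints of (MIP) and (LP) for evaluated DMU k and index set E.
  lam and alpha are indexed by E (zero outside E); sm by i<m, sp by r<s (zero outside).\<close>
definition common_constr ::
  "(nat \<Rightarrow> nat \<Rightarrow> real) \<Rightarrow> (nat \<Rightarrow> nat \<Rightarrow> real) \<Rightarrow> nat \<Rightarrow> nat \<Rightarrow> nat \<Rightarrow> nat \<Rightarrow> nat set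
   \<Rightarrow> (nat \<Rightarrow> real) \<Rightarrow> (nat \<Rightarrow> real) \<Rightarrow> (nat \<Rightarrow> real) \<Rightarrow> real \<Rightarrow> (nat \<Rightarrow> real) \<Rightarrow> real \<Rightarrow> bool" where
  "common_constr x y n m s k E lam sm sp \<delta> \<alpha> \<gamma> \<longleftrightarrow>
     (\<forall>i<m. (\<Sum>j\<in>E. x i j * lam j) + sm i - x i k * \<delta> = 0) \<and>
     (\<forall>r<s. (\<Sum>j\<in>E. y r j * lam j) - sp r - y r k * \<delta> = 0) \<and>
     (\<Sum>j\<in>E. lam j) - \<delta> = 0 \<and>
     weighted_slack x y n m s sm sp - real (m + s) * (1 - ram_rho x y n m s k) * \<delta> = 0 \<and>
     (\<forall>j\<in>E. \<alpha> j \<le> lam j) \<and> \<gamma> \<le> \<delta> \<and>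
     (\<forall>j\<in>E. lam j \<ge> 0) \<and> (\<forall>i<m. sm i \<ge> 0) \<and> (\<forall>r<s. sp r \<ge> 0) \<and> \<delta> \<ge> 0 \<and>
     (\<forall>j. j \<notin> E \<longrightarrow> lam j = 0 \<and> \<alpha> j = 0) \<and>
     (\<forall>i. m \<le> i \<longrightarrow> sm i = 0) \<and> (\<forall>r. s \<le> r \<longrightarrow> sp r = 0)"

definition mip_feasible where
  "mip_feasible x y n m s k E lam sm sp \<delta> \<alpha> \<gamma> \<longleftrightarrow>
     common_constr x y n m s k E lam sm sp \<delta> \<alpha> \<gamma> \<and>
     (\<forall>j\<in>E. \<alpha> j \<in> {0, 1}) \<and> \<gamma> \<in> {0, 1}"

definition lp_feasible where
  "lp_feasible x y n m s k E lam sm sp \<delta> \<alpha> \<gamma> \<longleftrightarrow>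
     common_constr x y n m s k E lam sm sp \<delta> \<alpha> \<gamma> \<and>
     (\<forall>j\<in>E. 0 \<le> \<alpha> j \<and> \<alpha> j \<le> 1) \<and> 0 \<le> \<gamma> \<and> \<gamma> \<le> 1"

definition eq_obj :: "nat set \<Rightarrow> (nat \<Rightarrow> real) \<Rightarrow> real \<Rightarrow> real" where
  "eq_obj E \<alpha> \<gamma> = (\<Sum>j\<in>E. \<alpha> j) + \<gamma>"

definition mip_optimal where
  "mip_optimal x y n m s k E lam sm sp \<delta> \<alpha> \<gamma> \<longleftrightarrow>
     mip_feasible x y n m s k E lam sm sp \<delta> \<alpha> \<gamma> \<and>
     (\<forall>lam' sm' sp' \<delta>' \<alpha>' \<gamma>'. mip_feasible x y n m s k E lam' sm' sp' \<delta>' \<alpha>' \<gamma>'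
        \<longrightarrow> eq_obj E \<alpha>' \<gamma>' \<le> eq_obj E \<alpha> \<gamma>)"

definition lp_optimal where
  "lp_optimal x y n m s k E lam sm sp \<delta> \<alpha> \<gamma> \<longleftrightarrow>
     lp_feasible x y n m s k E lam sm sp \<delta> \<alpha> \<gamma> \<and>
     (\<forall>lam' sm' sp' \<delta>' \<alpha>' \<gamma>'. lp_feasible x y n m s k E lam' sm' sp' \<delta>' \<alpha>' \<gamma>'
        \<longrightarrow> eq_obj E \<alpha>' \<gamma>' \<le> eq_obj E \<alpha> \<gamma>)"

end

theory Submission imports Defs "HOL-Analysis.Analysis" begin

lemma compact_box: "compact (Pi UNIV (\<lambda>j::nat. if j < n then {0..1::real} else {0}))"
proof -
  have "compactin (product_topology (\<lambda>i. euclidean) UNIV) (PiE UNIV (\<lambda>j::nat. if j < n then {0..1::real} else {0}))"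
    by (subst compactin_PiE) auto
  then show ?thesis by (simp add: euclidean_product_topology PiE_UNIV_domain)
qed

lemma ram_attain:
  assumes "k < n"
  shows "\<exists>lam sm sp. ram_feasible x y n m s k lam sm sp \<and> (\<forall>j. n \<le> j \<longrightarrow> lam j = 0) \<and>
     (\<forall>lam' sm' sp'. ram_feasible x y n m s k lam' sm' sp' \<longrightarrow>
        ram_obj x y n m s sm sp \<le> ram_obj x y n m s sm' sp')"
proof -
  define SM where "SM l = (\<lambda>i. x i k - (\<Sum>j<n. x i j * l j))" for l :: "nat \<Rightarrow> real"
  define SP where "SP l = (\<lambda>r. (\<Sum>j<n. y r j * l j) - y r k)" for l :: "nat \<Rightarrow> real"
  define G where "G l = ram_obj x y n m s (SM l) (SP l)" for l
  define K where "K = Pi UNIV (\<lambda>j::nat. if j < n then {0..1::real} else {0}) \<inter>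
     {l. \<forall>i. i < m \<longrightarrow> (\<Sum>j<n. x i j * l j) \<le> x i k} \<inter>
     {l. \<forall>r. r < s \<longrightarrow> y r k \<le> (\<Sum>j<n. y r j * l j)} \<inter> {l. (\<Sum>j<n. l j) = 1}"
  have clos1: "closed {l. \<forall>i. i < m \<longrightarrow> (\<Sum>j<n. x i j * l j) \<le> x i k}"
    by (intro closed_Collect_all closed_Collect_imp closed_Collect_le continuous_intros) simp_all
  have clos2: "closed {l. \<forall>r. r < s \<longrightarrow> y r k \<le> (\<Sum>j<n. y r j * l (j::nat))}"
    by (intro closed_Collect_all closed_Collect_imp closed_Collect_le continuous_intros) simp_all
  have clos3: "closed {l. (\<Sum>j<n. l j) = (1::real)}"
    by (intro closed_Collect_eq continuous_intros) simp_all
  have "compact K" unfolding K_def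
    by (intro compact_Int_closed closed_Int compact_box clos1 clos2 clos3)
  have lin: "\<And>l i. (\<Sum>j<n. x i j * l j) = (\<Sum>j<n. x i j * l j)" by simp
  let ?e = "\<lambda>j::nat. if j = k then 1::real else 0"
  have eK: "?e \<in> K" unfolding K_def using assms
    by (auto simp: if_distrib sum.delta cong: if_cong)
  have contG: "continuous_on K G"
    unfolding G_def ram_obj_def weighted_slack_def SM_def SP_def divide_inverse
    by (intro continuous_intros continuous_on_subset[OF continuous_on_product_coordinates]) simp_all
  obtain l0 where l0K: "l0 \<in> K" and l0min: "\<And>l. l \<in> K \<Longrightarrow> G l0 \<le> G l"
    using continuous_attains_inf[OF \<open>compact K\<close> _ contG] eK by blast
  have restr: "(\<lambda>j. if j < n then l j else 0) \<in> K" and Geq: "G (\<lambda>j. if j < n then l j else 0) = ram_obj x y n m s sm sp"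
    if f: "ram_feasible x y n m s k l sm sp" for l sm sp
  proof -
    have nn: "\<forall>j<n. 0 \<le> l j" and s1: "(\<Sum>j<n. l j) = 1" using f by (auto simp: ram_feasible_def)
    have le1: "l j \<le> 1" if "j < n" for j
    proof -
      have "l j \<le> (\<Sum>j<n. l j)" using that nn by (intro member_le_sum) auto
      then show ?thesis using s1 by simp
    qed
    have sm: "\<And>i. i < m \<Longrightarrow> sm i = SM l i" and sp: "\<And>r. r < s \<Longrightarrow> sp r = SP l r"
      using f by (auto simp: ram_feasible_def SM_def SP_def algebra_simps)
    have smnn: "\<And>i. i < m \<Longrightarrow> 0 \<le> sm i" and spnn: "\<And>r. r < s \<Longrightarrow> 0 \<le> sp r"
      using f by (auto simp: ram_feasible_def)
    have eqs: "\<And>c. (\<Sum>j<n. c j * (if j < n then l j else 0)) = (\<Sum>j<n. c j * l j)"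
      by (intro sum.cong) auto
    show "(\<lambda>j. if j < n then l j else 0) \<in> K" unfolding K_def
      using nn le1 s1 smnn spnn sm sp by (auto simp: eqs SM_def SP_def)
    show "G (\<lambda>j. if j < n then l j else 0) = ram_obj x y n m s sm sp"
      unfolding G_def ram_obj_def weighted_slack_def using sm sp
      by (simp add: eqs SM_def SP_def)
  qed
  have l0P: "l0 \<in> Pi UNIV (\<lambda>j::nat. if j < n then {0..1::real} else {0})" using l0K[unfolded K_def, THEN IntD1, THEN IntD1, THEN IntD1] .
  have l0j: "\<And>j. l0 j \<in> (if j < n then {0..1::real} else {0})" using l0P unfolding Pi_def by blast
  have f0: "ram_feasible x y n m s k l0 (SM l0) (SP l0)"
    proof -
    have "\<forall>j<n. 0 \<le> l0 j" proof (intro allI impI)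
      fix j assume "j < n"
      then have "l0 j \<in> {0..1}" using l0j[of j] by simp
      then show "0 \<le> l0 j" by simp
    qed
    then show ?thesis using l0K unfolding K_def ram_feasible_def SM_def SP_def by auto
  qed
  have z0: "\<forall>j. n \<le> j \<longrightarrow> l0 j = 0"
  proof (intro allI impI)
    fix j assume "n \<le> j"
    then have "l0 j \<in> {0}" using l0j[of j] by simp
    then show "l0 j = 0" by simp
  qed
  have opt0: "\<forall>lam' sm' sp'. ram_feasible x y n m s k lam' sm' sp' \<longrightarrow>
        ram_obj x y n m s (SM l0) (SP l0) \<le> ram_obj x y n m s sm' sp'"
  proof (intro allI impI)
    fix lam' sm' sp' assume h: "ram_feasible x y n m s k lam' sm' sp'"
    have "G l0 \<le> G (\<lambda>j. if j < n then lam' j else 0)" by (rule l0min[OF restr[OF h]])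
    then show "ram_obj x y n m s (SM l0) (SP l0) \<le> ram_obj x y n m s sm' sp'"
      using Geq[OF h] by (simp add: G_def)
  qed
  show ?thesis using f0 z0 opt0 by blast
qed

lemma rho_eq:
  assumes "ram_feasible x y n m s k l sm sp"
    and "\<forall>lam' sm' sp'. ram_feasible x y n m s k lam' sm' sp' \<longrightarrow>
        ram_obj x y n m s sm sp \<le> ram_obj x y n m s sm' sp'"
  shows "ram_rho x y n m s k = ram_obj x y n m s sm sp"
  unfolding ram_rho_def using assms by (intro cInf_eq_minimum) auto

lemma rw_nonneg: "0 < n \<Longrightarrow> 0 \<le> range_weight v n i"
proof -
  assume "0 < n"
  then have "Min ((\<lambda>j. v i j) ` {..<n}) \<le> v i 0" "v i 0 \<le> Max ((\<lambda>j. v i j) ` {..<n})"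
    by (auto intro!: Min_le Max_ge)
  then show ?thesis unfolding range_weight_def by simp
qed

lemma ws_nonneg:
  assumes "0 < n" "\<forall>i<m. sm i \<ge> 0" "\<forall>r<s. sp r \<ge> 0"
  shows "0 \<le> weighted_slack x y n m s sm sp"
  unfolding weighted_slack_def using assms rw_nonneg
  by (auto intro!: add_nonneg_nonneg sum_nonneg mult_nonneg_nonneg)

lemma sum_sub:
  fixes c l mu :: "nat \<Rightarrow> real"
  assumes "j < n"
  shows "(\<Sum>q<n. c q * (l q - (if q=j then l j else 0) + a * mu q)) =
     (\<Sum>q<n. c q * l q) - c j * l j + a * (\<Sum>q<n. c q * mu q)"
proof -
  have "(\<Sum>q<n. c q * (l q - (if q=j then l j else 0) + a * mu q)) =
     (\<Sum>q<n. c q * l q) - (\<Sum>q<n. (if q=j then c j * l j else 0)) + (\<Sum>q<n. a * (c q * mu q))"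
  proof -
    have "(\<Sum>q<n. c q * (l q - (if q=j then l j else 0) + a * mu q)) =
      (\<Sum>q<n. c q * l q - (if q=j then c j * l j else 0) + a * (c q * mu q))"
      by (intro sum.cong) (auto simp: ring_distribs)
    then show ?thesis by (simp add: sum.distrib sum_subtractf)
  qed
  also have "\<dots> = (\<Sum>q<n. c q * l q) - c j * l j + a * (\<Sum>q<n. c q * mu q)"
    using assms by (simp add: sum_distrib_left)
  finally show ?thesis .
qed

lemma ws_lin: "weighted_slack x y n m s (\<lambda>i. a i + c * b i) (\<lambda>r. d r + c * e r) =
   weighted_slack x y n m s a d + c * weighted_slack x y n m s b e"
  unfolding weighted_slack_def
  by (simp add: sum.distrib sum_distrib_left distrib_left mult.left_commute)

lemma support:
  assumes kn: "k < n" and jn: "j < n" and rj: "ram_rho x y n m s j \<noteq> 1"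
    and f: "ram_feasible x y n m s k l sm sp"
    and opt: "\<forall>lam' sm' sp'. ram_feasible x y n m s k lam' sm' sp' \<longrightarrow>
        ram_obj x y n m s sm sp \<le> ram_obj x y n m s sm' sp'"
  shows "l j = 0"
proof (rule ccontr)
  assume "l j \<noteq> 0"
  with f jn have lj: "l j > 0" by (auto simp: ram_feasible_def less_le)
  obtain mu tm tp where fj: "ram_feasible x y n m s j mu tm tp" and
    optj: "\<forall>lam' sm' sp'. ram_feasible x y n m s j lam' sm' sp' \<longrightarrow>
        ram_obj x y n m s tm tp \<le> ram_obj x y n m s sm' sp'"
    using ram_attain[OF jn] by blast
  have "ram_rho x y n m s j = ram_obj x y n m s tm tp" using rho_eq[OF fj optj] .
  moreover have "0 \<le> weighted_slack x y n m s tm tp"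
    using fj jn by (intro ws_nonneg) (auto simp: ram_feasible_def)
  ultimately have Wt: "weighted_slack x y n m s tm tp / real (m + s) > 0" using rj
    unfolding ram_obj_def by (smt (verit) divide_nonneg_nonneg of_nat_0_le_iff)
  define l' where "l' q = l q - (if q=j then l j else 0) + l j * mu q" for q
  define sm' where "sm' = (\<lambda>i. sm i + l j * tm i)"
  define sp' where "sp' = (\<lambda>r. sp r + l j * tp r)"
  have f': "ram_feasible x y n m s k l' sm' sp'"
  proof -
    have A: "(\<Sum>q<n. x i q * l' q) + sm' i = x i k" if "i < m" for i
    proof -
      have e1: "(\<Sum>q<n. x i q * l' q) = (\<Sum>q<n. x i q * l q) - x i j * l j + l j * (\<Sum>q<n. x i q * mu q)"
        unfolding l'_def by (rule sum_sub[OF jn])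
      have e2: "(\<Sum>q<n. x i q * mu q) = x i j - tm i" using fj that by (auto simp: ram_feasible_def algebra_simps)
      have e3: "(\<Sum>q<n. x i q * l q) = x i k - sm i" using f that by (auto simp: ram_feasible_def algebra_simps)
      show ?thesis unfolding sm'_def e1 e2 e3 by (simp add: algebra_simps)
    qed
    have B: "(\<Sum>q<n. y r q * l' q) - sp' r = y r k" if "r < s" for r
    proof -
      have e1: "(\<Sum>q<n. y r q * l' q) = (\<Sum>q<n. y r q * l q) - y r j * l j + l j * (\<Sum>q<n. y r q * mu q)"
        unfolding l'_def by (rule sum_sub[OF jn])
      have e2: "(\<Sum>q<n. y r q * mu q) = y r j + tp r" using fj that by (auto simp: ram_feasible_def algebra_simps)
      have e3: "(\<Sum>q<n. y r q * l q) = y r k + sp r" using f that by (auto simp: ram_feasible_def algebra_simps)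
      show ?thesis unfolding sp'_def e1 e2 e3 by (simp add: algebra_simps)
    qed
    have C: "(\<Sum>q<n. l' q) = 1"
    proof -
      have "(\<Sum>q<n. 1 * l' q) = (\<Sum>q<n. 1 * l q) - 1 * l j + l j * (\<Sum>q<n. 1 * mu q)"
        unfolding l'_def by (rule sum_sub[OF jn])
      then show ?thesis using f fj by (simp add: ram_feasible_def)
    qed
    have D: "\<forall>q<n. 0 \<le> l' q"
    proof (intro allI impI)
      fix q assume q: "q < n"
      have "0 \<le> mu q" "0 \<le> l q" using q f fj by (auto simp: ram_feasible_def)
      then have "0 \<le> l j * mu q" using lj by simp
      then show "0 \<le> l' q" unfolding l'_def using \<open>0 \<le> l q\<close> by simp
    qed
    have E1: "\<forall>i<m. 0 \<le> sm' i"
    proof (intro allI impI)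
      fix i assume i: "i < m"
      have "0 \<le> tm i" "0 \<le> sm i" using i f fj by (auto simp: ram_feasible_def)
      then show "0 \<le> sm' i" unfolding sm'_def using lj by simp
    qed
    have E2: "\<forall>r<s. 0 \<le> sp' r"
    proof (intro allI impI)
      fix r assume r: "r < s"
      have "0 \<le> tp r" "0 \<le> sp r" using r f fj by (auto simp: ram_feasible_def)
      then show "0 \<le> sp' r" unfolding sp'_def using lj by simp
    qed
    note E = E1 E2
    show ?thesis unfolding ram_feasible_def using A B C D E by auto
  qed
  have "weighted_slack x y n m s sm' sp' = weighted_slack x y n m s sm sp + l j * weighted_slack x y n m s tm tp"
    unfolding sm'_def sp'_def by (rule ws_lin)
  then have "ram_obj x y n m s sm' sp' = ram_obj x y n m s sm sp - l j * (weighted_slack x y n m s tm tp / real (m + s))"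
    unfolding ram_obj_def by (simp add: add_divide_distrib)
  moreover have "l j * (weighted_slack x y n m s tm tp / real (m + s)) > 0" using lj Wt by (rule mult_pos_pos)
  moreover have "ram_obj x y n m s sm sp \<le> ram_obj x y n m s sm' sp'" using opt f' by blast
  ultimately show False by linarith
qed

definition base where
  "base x y n m s k E lam sm sp \<delta> \<longleftrightarrow> common_constr x y n m s k E lam sm sp \<delta> (\<lambda>_. 0) 0"

lemma cc_iff:
  "common_constr x y n m s k E lam sm sp \<delta> \<alpha> \<gamma> \<longleftrightarrow>
   base x y n m s k E lam sm sp \<delta> \<and> (\<forall>j\<in>E. \<alpha> j \<le> lam j) \<and> \<gamma> \<le> \<delta> \<and> (\<forall>j. j \<notin> E \<longrightarrow> \<alpha> j = 0)"
  unfolding base_def common_constr_def by auto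

lemma ws_add: "weighted_slack x y n m s (\<lambda>i. a i + b i) (\<lambda>r. d r + e r) =
   weighted_slack x y n m s a d + weighted_slack x y n m s b e"
  unfolding weighted_slack_def
  by (simp add: sum.distrib distrib_left)

lemma ws_scale: "weighted_slack x y n m s (\<lambda>i. c * a i) (\<lambda>r. c * d r) =
   c * weighted_slack x y n m s a d"
  unfolding weighted_slack_def
  by (simp add: sum_distrib_left distrib_left mult.left_commute)

lemma base_add:
  assumes B1: "base x y n m s k E l1 sm1 sp1 d1" and B2: "base x y n m s k E l2 sm2 sp2 d2"
  shows "base x y n m s k E (\<lambda>j. l1 j + l2 j) (\<lambda>i. sm1 i + sm2 i) (\<lambda>r. sp1 r + sp2 r) (d1 + d2)"
proof -
  have sd: "\<And>c. (\<Sum>j\<in>E. c j * (l1 j + l2 j)) = (\<Sum>j\<in>E. c j * l1 j) + (\<Sum>j\<in>E. c j * l2 j)"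
    by (simp add: distrib_left sum.distrib)
  have sl: "(\<Sum>j\<in>E. l1 j + l2 j) = (\<Sum>j\<in>E. l1 j) + (\<Sum>j\<in>E. l2 j)" by (simp add: sum.distrib)
  note ws = ws_add[of x y n m s sm1 sm2 sp1 sp2]
  have a1: "\<forall>i<m. (\<Sum>j\<in>E. x i j * l1 j) + sm1 i - x i k * d1 = 0"
   and b1: "\<forall>r<s. (\<Sum>j\<in>E. y r j * l1 j) - sp1 r - y r k * d1 = 0"
   and c1: "(\<Sum>j\<in>E. l1 j) - d1 = 0"
   and w1: "weighted_slack x y n m s sm1 sp1 - real (m + s) * (1 - ram_rho x y n m s k) * d1 = 0"
   and r1: "(\<forall>j\<in>E. l1 j \<ge> 0) \<and> (\<forall>i<m. sm1 i \<ge> 0) \<and> (\<forall>r<s. sp1 r \<ge> 0) \<and> d1 \<ge> 0 \<and>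
     (\<forall>j. j \<notin> E \<longrightarrow> l1 j = 0) \<and> (\<forall>i. m \<le> i \<longrightarrow> sm1 i = 0) \<and> (\<forall>r. s \<le> r \<longrightarrow> sp1 r = 0)"
    using B1 unfolding base_def common_constr_def by auto
  have a2: "\<forall>i<m. (\<Sum>j\<in>E. x i j * l2 j) + sm2 i - x i k * d2 = 0"
   and b2: "\<forall>r<s. (\<Sum>j\<in>E. y r j * l2 j) - sp2 r - y r k * d2 = 0"
   and c2: "(\<Sum>j\<in>E. l2 j) - d2 = 0"
   and w2: "weighted_slack x y n m s sm2 sp2 - real (m + s) * (1 - ram_rho x y n m s k) * d2 = 0"
   and r2: "(\<forall>j\<in>E. l2 j \<ge> 0) \<and> (\<forall>i<m. sm2 i \<ge> 0) \<and> (\<forall>r<s. sp2 r \<ge> 0) \<and> d2 \<ge> 0 \<and>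
     (\<forall>j. j \<notin> E \<longrightarrow> l2 j = 0) \<and> (\<forall>i. m \<le> i \<longrightarrow> sm2 i = 0) \<and> (\<forall>r. s \<le> r \<longrightarrow> sp2 r = 0)"
    using B2 unfolding base_def common_constr_def by auto
  have a': "\<forall>i<m. (\<Sum>j\<in>E. x i j * l1 j) + (\<Sum>j\<in>E. x i j * l2 j) + (sm1 i + sm2 i) - x i k * (d1 + d2) = 0"
  proof (intro allI impI)
    fix i assume "i < m"
    then have "(\<Sum>j\<in>E. x i j * l1 j) + sm1 i - x i k * d1 = 0" "(\<Sum>j\<in>E. x i j * l2 j) + sm2 i - x i k * d2 = 0"
      using a1 a2 by auto
    then show "(\<Sum>j\<in>E. x i j * l1 j) + (\<Sum>j\<in>E. x i j * l2 j) + (sm1 i + sm2 i) - x i k * (d1 + d2) = 0"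
      by (simp add: algebra_simps)
  qed
  have b': "\<forall>r<s. (\<Sum>j\<in>E. y r j * l1 j) + (\<Sum>j\<in>E. y r j * l2 j) - (sp1 r + sp2 r) - y r k * (d1 + d2) = 0"
  proof (intro allI impI)
    fix r assume "r < s"
    then have "(\<Sum>j\<in>E. y r j * l1 j) - sp1 r - y r k * d1 = 0" "(\<Sum>j\<in>E. y r j * l2 j) - sp2 r - y r k * d2 = 0"
      using b1 b2 by auto
    then show "(\<Sum>j\<in>E. y r j * l1 j) + (\<Sum>j\<in>E. y r j * l2 j) - (sp1 r + sp2 r) - y r k * (d1 + d2) = 0"
      by (simp add: algebra_simps)
  qed
  have c': "(\<Sum>j\<in>E. l1 j) + (\<Sum>j\<in>E. l2 j) - (d1 + d2) = 0" using c1 c2 by simp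
  have w': "weighted_slack x y n m s sm1 sp1 + weighted_slack x y n m s sm2 sp2 - real (m + s) * (1 - ram_rho x y n m s k) * (d1 + d2) = 0"
    using w1 w2 by (simp add: algebra_simps)
  show ?thesis unfolding base_def common_constr_def sd sl ws
    using a' b' c' w' r1 r2 by auto
qed

lemma base_scale:
  assumes B: "base x y n m s k E l sm sp d" and t: "0 \<le> t"
  shows "base x y n m s k E (\<lambda>j. t * l j) (\<lambda>i. t * sm i) (\<lambda>r. t * sp r) (t * d)"
proof -
  have sd: "\<And>c. (\<Sum>j\<in>E. c j * (t * l j)) = t * (\<Sum>j\<in>E. c j * l j)"
    by (simp add: sum_distrib_left mult.left_commute)
  have sl: "(\<Sum>j\<in>E. t * l j) = t * (\<Sum>j\<in>E. l j)" by (simp add: sum_distrib_left)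
  note ws = ws_scale[of x y n m s t sm sp]
  have a: "\<forall>i<m. (\<Sum>j\<in>E. x i j * l j) + sm i - x i k * d = 0"
   and b: "\<forall>r<s. (\<Sum>j\<in>E. y r j * l j) - sp r - y r k * d = 0"
   and c: "(\<Sum>j\<in>E. l j) - d = 0"
   and w: "weighted_slack x y n m s sm sp - real (m + s) * (1 - ram_rho x y n m s k) * d = 0"
   and rest: "(\<forall>j\<in>E. l j \<ge> 0) \<and> (\<forall>i<m. sm i \<ge> 0) \<and> (\<forall>r<s. sp r \<ge> 0) \<and> d \<ge> 0 \<and>
     (\<forall>j. j \<notin> E \<longrightarrow> l j = 0) \<and> (\<forall>i. m \<le> i \<longrightarrow> sm i = 0) \<and> (\<forall>r. s \<le> r \<longrightarrow> sp r = 0)"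
    using B unfolding base_def common_constr_def by auto
  have a': "\<forall>i<m. t * (\<Sum>j\<in>E. x i j * l j) + t * sm i - x i k * (t * d) = 0"
  proof (intro allI impI)
    fix i assume "i < m"
    then have "t * ((\<Sum>j\<in>E. x i j * l j) + sm i - x i k * d) = 0" using a by simp
    then show "t * (\<Sum>j\<in>E. x i j * l j) + t * sm i - x i k * (t * d) = 0" by (simp add: algebra_simps)
  qed
  have b': "\<forall>r<s. t * (\<Sum>j\<in>E. y r j * l j) - t * sp r - y r k * (t * d) = 0"
  proof (intro allI impI)
    fix r assume "r < s"
    then have "t * ((\<Sum>j\<in>E. y r j * l j) - sp r - y r k * d) = 0" using b by simp
    then show "t * (\<Sum>j\<in>E. y r j * l j) - t * sp r - y r k * (t * d) = 0" by (simp add: algebra_simps)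
  qed
  have c': "t * (\<Sum>j\<in>E. l j) - t * d = 0" using c by simp
  have w': "t * weighted_slack x y n m s sm sp - real (m + s) * (1 - ram_rho x y n m s k) * (t * d) = 0"
  proof -
    have "t * (weighted_slack x y n m s sm sp - real (m + s) * (1 - ram_rho x y n m s k) * d) = 0" using w by simp
    then show ?thesis by (simp add: algebra_simps)
  qed
  show ?thesis unfolding base_def common_constr_def sd sl ws
    using a' b' c' w' rest t by auto
qed

lemma point0:
  assumes kn: "k < n" and Edef: "E = eff_set x y n m s"
  shows "\<exists>l sm sp. base x y n m s k E l sm sp 1"
proof -
  obtain l sm sp where f: "ram_feasible x y n m s k l sm sp" and z: "\<forall>j. n \<le> j \<longrightarrow> l j = 0"
    and opt: "\<forall>lam' sm' sp'. ram_feasible x y n m s k lam' sm' sp' \<longrightarrow>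
        ram_obj x y n m s sm sp \<le> ram_obj x y n m s sm' sp'"
    using ram_attain[OF kn] by blast
  have rho: "ram_rho x y n m s k = ram_obj x y n m s sm sp" by (rule rho_eq[OF f opt])
  have ES: "E \<subseteq> {..<n}" using Edef by (auto simp: eff_set_def)
  have zE: "\<forall>j. j \<notin> E \<longrightarrow> l j = 0"
  proof (intro allI impI)
    fix j assume jE: "j \<notin> E"
    show "l j = 0"
    proof (cases "j < n")
      case True
      then have "ram_rho x y n m s j \<noteq> 1" using jE Edef by (auto simp: eff_set_def)
      then show ?thesis using support[OF kn True _ f opt] by blast
    next
      case False then show ?thesis using z by simp
    qed
  qed
  have sumE: "\<And>c. (\<Sum>j\<in>E. c j * l j) = (\<Sum>j<n. c j * l j)"
    by (rule sum.mono_neutral_left) (use ES zE in auto)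
  have sumE1: "(\<Sum>j\<in>E. l j) = (\<Sum>j<n. l j)"
    by (rule sum.mono_neutral_left) (use ES zE in auto)
  define sm' where "sm' = (\<lambda>i. if i < m then sm i else 0)"
  define sp' where "sp' = (\<lambda>r. if r < s then sp r else 0)"
  have ws: "weighted_slack x y n m s sm' sp' = weighted_slack x y n m s sm sp"
  proof -
    have "(\<Sum>i<m. range_weight x n i * sm' i) = (\<Sum>i<m. range_weight x n i * sm i)"
      by (rule sum.cong) (auto simp: sm'_def)
    moreover have "(\<Sum>r<s. range_weight y n r * sp' r) = (\<Sum>r<s. range_weight y n r * sp r)"
      by (rule sum.cong) (auto simp: sp'_def)
    ultimately show ?thesis unfolding weighted_slack_def by simp
  qed
  have wsd: "weighted_slack x y n m s sm' sp' - real (m + s) * (1 - ram_rho x y n m s k) * 1 = 0"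
  proof (cases "m + s = 0")
    case True
    then show ?thesis unfolding ws by (simp add: weighted_slack_def)
  next
    case False
    then have "real m + real s \<noteq> 0" by linarith
    then show ?thesis unfolding ws rho ram_obj_def by simp
  qed
  have A: "\<forall>i<m. (\<Sum>j\<in>E. x i j * l j) + sm' i - x i k * 1 = 0"
    using f unfolding sumE sm'_def ram_feasible_def by auto
  have B: "\<forall>r<s. (\<Sum>j\<in>E. y r j * l j) - sp' r - y r k * 1 = 0"
    using f unfolding sumE sp'_def ram_feasible_def by auto
  have C: "(\<Sum>j\<in>E. l j) - 1 = 0" using f unfolding sumE1 ram_feasible_def by auto
  have D: "(\<forall>j\<in>E. l j \<ge> 0) \<and> (\<forall>i<m. sm' i \<ge> 0) \<and> (\<forall>r<s. sp' r \<ge> 0) \<and>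
     (\<forall>i. m \<le> i \<longrightarrow> sm' i = 0) \<and> (\<forall>r. s \<le> r \<longrightarrow> sp' r = 0)"
    using f ES unfolding sm'_def sp'_def ram_feasible_def by auto
  have "base x y n m s k E l sm' sp' 1"
    unfolding base_def common_constr_def using A B C D wsd zE by auto
  then show ?thesis by blast
qed

lemma base_facts:
  assumes "base x y n m s k E l sm sp d"
  shows "\<forall>j\<in>E. 0 \<le> l j" "(\<Sum>j\<in>E. l j) = d" "\<forall>j. j \<notin> E \<longrightarrow> l j = 0"
  using assms unfolding base_def common_constr_def by auto

lemma maxsupp:
  assumes fin: "finite E" and ex: "base x y n m s k E l0 sm0 sp0 d0"
  shows "\<exists>ls sms sps ds. base x y n m s k E ls sms sps ds \<and>
     (\<forall>l sm sp d. base x y n m s k E l sm sp d \<longrightarrow> {j\<in>E. 0 < l j} \<subseteq> {j\<in>E. 0 < ls j})"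
proof -
  define P where "P = {card {j\<in>E. 0 < l j} | l sm sp d. base x y n m s k E l sm sp d}"
  have "P \<subseteq> {..card E}" unfolding P_def using fin by (auto intro!: card_mono)
  then have finP: "finite P" by (rule finite_subset) simp
  have "card {j\<in>E. 0 < l0 j} \<in> P" unfolding P_def using ex by blast
  then have "P \<noteq> {}" by blast
  define N where "N = Max P"
  have "N \<in> P" unfolding N_def using finP \<open>P \<noteq> {}\<close> by (rule Max_in)
  then obtain ls sms sps ds where B: "base x y n m s k E ls sms sps ds" and cN: "card {j\<in>E. 0 < ls j} = N"
    unfolding P_def by blast
  have maxN: "\<And>q. q \<in> P \<Longrightarrow> q \<le> N" unfolding N_def using finP by simp
  have "\<forall>l sm sp d. base x y n m s k E l sm sp d \<longrightarrow> {j\<in>E. 0 < l j} \<subseteq> {j\<in>E. 0 < ls j}"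
  proof (intro allI impI subsetI)
    fix l sm sp d j assume Bl: "base x y n m s k E l sm sp d" and jS: "j \<in> {j\<in>E. 0 < l j}"
    show "j \<in> {j\<in>E. 0 < ls j}"
    proof (rule ccontr)
      assume nj: "j \<notin> {j\<in>E. 0 < ls j}"
      have Bs: "base x y n m s k E (\<lambda>j. ls j + l j) (\<lambda>i. sms i + sm i) (\<lambda>r. sps r + sp r) (ds + d)"
        by (rule base_add[OF B Bl])
      have nn1: "\<forall>j\<in>E. 0 \<le> ls j" using base_facts(1)[OF B] .
      have nn2: "\<forall>j\<in>E. 0 \<le> l j" using base_facts(1)[OF Bl] .
      have sub: "insert j {j\<in>E. 0 < ls j} \<subseteq> {j'\<in>E. 0 < ls j' + l j'}"
        using jS nn1 nn2 by (auto simp: add_pos_nonneg add_nonneg_pos)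
      have "card (insert j {j\<in>E. 0 < ls j}) = N + 1" using nj fin cN by simp
      moreover have "card (insert j {j\<in>E. 0 < ls j}) \<le> card {j'\<in>E. 0 < ls j' + l j'}"
        by (rule card_mono) (use fin sub in auto)
      moreover have "card {j'\<in>E. 0 < ls j' + l j'} \<in> P" unfolding P_def mem_Collect_eq
        by (rule exI[of _ "\<lambda>j. ls j + l j"], rule exI[of _ "\<lambda>i. sms i + sm i"],
            rule exI[of _ "\<lambda>r. sps r + sp r"], rule exI[of _ "ds + d"]) (simp add: Bs)
      ultimately show False using maxN by fastforce
    qed
  qed
  then show ?thesis using B by blast
qed

lemma mip_lp: "mip_feasible x y n m s k E lam sm sp \<delta> \<alpha> \<gamma> \<Longrightarrow> lp_feasible x y n m s k E lam sm sp \<delta> \<alpha> \<gamma>"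
  unfolding mip_feasible_def lp_feasible_def by auto

theorem theorem2:
  fixes x y :: "nat \<Rightarrow> nat \<Rightarrow> real" and n m s k :: nat
  assumes x_nonneg: "\<forall>i<m. \<forall>j<n. x i j \<ge> 0"
    and y_nonneg: "\<forall>r<s. \<forall>j<n. y r j \<ge> 0"
    and o_in: "k < n"
  defines "E \<equiv> eff_set x y n m s"
  shows "(\<exists>v. (\<exists>lam sm sp \<delta> \<alpha> \<gamma>. lp_optimal x y n m s k E lam sm sp \<delta> \<alpha> \<gamma> \<and> eq_obj E \<alpha> \<gamma> = v)
            \<and> (\<exists>lam sm sp \<delta> \<alpha> \<gamma>. mip_optimal x y n m s k E lam sm sp \<delta> \<alpha> \<gamma> \<and> eq_obj E \<alpha> \<gamma> = v))
       \<and> (\<forall>lam sm sp \<delta> \<alpha> \<gamma>. lp_optimal x y n m s k E lam sm sp \<delta> \<alpha> \<gamma> \<longrightarrow>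
            \<gamma> = 1 \<and> (\<forall>j\<in>E. \<alpha> j \<in> {0, 1}) \<and> mip_optimal x y n m s k E lam sm sp \<delta> \<alpha> \<gamma>)"
proof -
  have ES: "E \<subseteq> {..<n}" unfolding E_def eff_set_def by auto
  then have finE: "finite E" by (rule finite_subset) simp
  obtain l0 sm0 sp0 where B0: "base x y n m s k E l0 sm0 sp0 1"
    using point0[OF o_in E_def[THEN meta_eq_to_obj_eq]] by blast
  obtain ls sms sps ds where Bs: "base x y n m s k E ls sms sps ds" and
    maxS: "\<forall>l sm sp d. base x y n m s k E l sm sp d \<longrightarrow> {j\<in>E. 0 < l j} \<subseteq> {j\<in>E. 0 < ls j}"
    using maxsupp[OF finE B0] by blast
  define S where "S = {j\<in>E. 0 < ls j}"
  have SE: "S \<subseteq> E" unfolding S_def by auto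
  have finS: "finite S" using finE SE by (rule finite_subset[rotated])
  have nnl0: "\<forall>j\<in>E. 0 \<le> l0 j" and s0: "(\<Sum>j\<in>E. l0 j) = 1" using base_facts[OF B0] by auto
  have "{j\<in>E. 0 < l0 j} \<noteq> {}"
  proof
    assume "{j\<in>E. 0 < l0 j} = {}"
    then have "\<forall>j\<in>E. \<not> 0 < l0 j" by blast
    then have "\<forall>j\<in>E. l0 j = 0" using nnl0 by (simp add: not_less order.antisym)
    then have "(\<Sum>j\<in>E. l0 j) = 0" by simp
    then show False using s0 by simp
  qed
  moreover have "{j\<in>E. 0 < l0 j} \<subseteq> S" using maxS B0 unfolding S_def by blast
  ultimately obtain j0 where j0: "j0 \<in> S" by blast
  have nns: "\<forall>j\<in>E. 0 \<le> ls j" and sds: "(\<Sum>j\<in>E. ls j) = ds" using base_facts[OF Bs] by auto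
  have "ls j0 \<le> (\<Sum>j\<in>E. ls j)" using j0 SE nns finE by (intro member_le_sum) auto
  moreover have "0 < ls j0" using j0 unfolding S_def by auto
  ultimately have dpos: "0 < ds" using sds by linarith
  define t where "t = 1 / ds + (\<Sum>j\<in>S. 1 / ls j)"
  have sum_nn: "0 \<le> (\<Sum>j\<in>S. 1 / ls j)" using SE nns by (intro sum_nonneg) auto
  have t0: "0 \<le> t" unfolding t_def using dpos sum_nn by simp
  have tj: "1 \<le> t * ls j" if jS: "j \<in> S" for j
  proof -
    have lpos: "0 < ls j" using jS unfolding S_def by auto
    have "1 / ls j \<le> (\<Sum>j\<in>S. 1 / ls j)" using jS finS SE nns by (intro member_le_sum) auto
    moreover have "0 \<le> 1 / ds" using dpos by simp
    ultimately have "1 / ls j \<le> t" unfolding t_def by linarith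
    then have "1 / ls j * ls j \<le> t * ls j" using lpos by (intro mult_right_mono) auto
    then show ?thesis using lpos by simp
  qed
  have td: "1 \<le> t * ds"
  proof -
    have "1 / ds \<le> t" unfolding t_def using sum_nn by simp
    then have "1 / ds * ds \<le> t * ds" using dpos by (intro mult_right_mono) auto
    then show ?thesis using dpos by simp
  qed
  define L where "L = (\<lambda>j. t * ls j)"
  define SM where "SM = (\<lambda>i. t * sms i)"
  define SP where "SP = (\<lambda>r. t * sps r)"
  define D where "D = t * ds"
  define A where "A = (\<lambda>j. if j \<in> S then 1 else (0::real))"
  have BL: "base x y n m s k E L SM SP D" unfolding L_def SM_def SP_def D_def by (rule base_scale[OF Bs t0])
  have ccA: "common_constr x y n m s k E L SM SP D A 1"
    unfolding cc_iff
  proof (intro conjI BL ballI allI impI)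
    fix j assume jE: "j \<in> E"
    show "A j \<le> L j"
    proof (cases "j \<in> S")
      case True then show ?thesis unfolding A_def L_def using tj by simp
    next
      case False then show ?thesis unfolding A_def L_def using t0 nns jE by simp
    qed
  next
    show "1 \<le> D" unfolding D_def by (rule td)
  next
    fix j assume "j \<notin> E" then show "A j = 0" unfolding A_def using SE by auto
  qed
  define V where "V = real (card S) + 1"
  have sumA: "(\<Sum>j\<in>E. A j) = real (card S)"
  proof -
    have "(\<Sum>j\<in>E. A j) = (\<Sum>j\<in>E \<inter> S. 1)" unfolding A_def
      by (subst sum.inter_restrict[OF finE]) simp
    also have "E \<inter> S = S" using SE by auto
    finally show ?thesis by simp
  qed
  have objA: "eq_obj E A 1 = V" unfolding eq_obj_def V_def sumA by simp
  have lpA: "lp_feasible x y n m s k E L SM SP D A 1"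
    unfolding lp_feasible_def using ccA by (auto simp: A_def)
  have mipA: "mip_feasible x y n m s k E L SM SP D A 1"
    unfolding mip_feasible_def using ccA by (auto simp: A_def)
  have UB: "eq_obj E \<alpha> \<gamma> \<le> V \<and> (eq_obj E \<alpha> \<gamma> = V \<longrightarrow> \<gamma> = 1 \<and> (\<forall>j\<in>E. \<alpha> j = A j))"
    if F: "lp_feasible x y n m s k E lam sm sp \<delta> \<alpha> \<gamma>" for lam sm sp \<delta> \<alpha> \<gamma>
  proof -
    have cc: "common_constr x y n m s k E lam sm sp \<delta> \<alpha> \<gamma>" and ab: "\<forall>j\<in>E. 0 \<le> \<alpha> j \<and> \<alpha> j \<le> 1"
      and g1: "\<gamma> \<le> 1" using F unfolding lp_feasible_def by auto
    then have Bl: "base x y n m s k E lam sm sp \<delta>" and al: "\<forall>j\<in>E. \<alpha> j \<le> lam j"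
      unfolding cc_iff by auto
    have sub: "{j\<in>E. 0 < lam j} \<subseteq> S" using maxS Bl unfolding S_def by blast
    have gnn: "\<forall>j\<in>E. 0 \<le> A j - \<alpha> j"
    proof
      fix j assume jE: "j \<in> E"
      show "0 \<le> A j - \<alpha> j"
      proof (cases "j \<in> S")
        case True then show ?thesis unfolding A_def using ab jE by simp
      next
        case False
        have "lam j \<le> 0"
        proof (rule ccontr)
          assume "\<not> lam j \<le> 0"
          then have "j \<in> {j\<in>E. 0 < lam j}" using jE by simp
          then show False using sub False by blast
        qed
        moreover have "\<alpha> j \<le> lam j" using al jE by blast
        ultimately show ?thesis unfolding A_def using False by simp
      qed
    qed
    have sg: "0 \<le> (\<Sum>j\<in>E. A j - \<alpha> j)" using gnn by (intro sum_nonneg) auto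
    have eqo: "eq_obj E \<alpha> \<gamma> = V - (\<Sum>j\<in>E. A j - \<alpha> j) - (1 - \<gamma>)"
      unfolding eq_obj_def V_def sum_subtractf sumA by simp
    show ?thesis
    proof (intro conjI impI)
      show "eq_obj E \<alpha> \<gamma> \<le> V" using eqo sg g1 by linarith
    next
      assume "eq_obj E \<alpha> \<gamma> = V"
      then have z: "(\<Sum>j\<in>E. A j - \<alpha> j) = 0" using eqo sg g1 by linarith
      show "\<gamma> = 1" using \<open>eq_obj E \<alpha> \<gamma> = V\<close> eqo sg g1 by linarith
      have "\<forall>j\<in>E. A j - \<alpha> j = 0"
        using sum_nonneg_eq_0_iff[OF finE, of "\<lambda>j. A j - \<alpha> j"] gnn z by simp
      then show "\<forall>j\<in>E. \<alpha> j = A j" by simp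
    qed
  qed
  have lpoptA: "lp_optimal x y n m s k E L SM SP D A 1"
    unfolding lp_optimal_def using lpA UB objA by auto
  have mipoptA: "mip_optimal x y n m s k E L SM SP D A 1"
    unfolding mip_optimal_def
  proof (intro conjI mipA allI impI)
    fix lam' sm' sp' \<delta>' \<alpha>' \<gamma>' assume "mip_feasible x y n m s k E lam' sm' sp' \<delta>' \<alpha>' \<gamma>'"
    then have "lp_feasible x y n m s k E lam' sm' sp' \<delta>' \<alpha>' \<gamma>'" by (rule mip_lp)
    then show "eq_obj E \<alpha>' \<gamma>' \<le> eq_obj E A 1" using UB objA by simp
  qed
  have part1: "\<exists>v. (\<exists>lam sm sp \<delta> \<alpha> \<gamma>. lp_optimal x y n m s k E lam sm sp \<delta> \<alpha> \<gamma> \<and> eq_obj E \<alpha> \<gamma> = v)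
            \<and> (\<exists>lam sm sp \<delta> \<alpha> \<gamma>. mip_optimal x y n m s k E lam sm sp \<delta> \<alpha> \<gamma> \<and> eq_obj E \<alpha> \<gamma> = v)"
    using lpoptA mipoptA by blast
  have part2: "\<gamma> = 1 \<and> (\<forall>j\<in>E. \<alpha> j \<in> {0, 1}) \<and> mip_optimal x y n m s k E lam sm sp \<delta> \<alpha> \<gamma>"
    if O: "lp_optimal x y n m s k E lam sm sp \<delta> \<alpha> \<gamma>" for lam sm sp \<delta> \<alpha> \<gamma>
  proof -
    have F: "lp_feasible x y n m s k E lam sm sp \<delta> \<alpha> \<gamma>" using O unfolding lp_optimal_def by blast
    have "eq_obj E A 1 \<le> eq_obj E \<alpha> \<gamma>" using O lpA unfolding lp_optimal_def by blast
    then have eqV: "eq_obj E \<alpha> \<gamma> = V" using UB[OF F] objA by linarith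
    then have g: "\<gamma> = 1" and aA: "\<forall>j\<in>E. \<alpha> j = A j" using UB[OF F] by auto
    have bin: "\<forall>j\<in>E. \<alpha> j \<in> {0, 1}" using aA unfolding A_def by auto
    have MF: "mip_feasible x y n m s k E lam sm sp \<delta> \<alpha> \<gamma>"
      using F bin g unfolding lp_feasible_def mip_feasible_def by auto
    have "mip_optimal x y n m s k E lam sm sp \<delta> \<alpha> \<gamma>"
      unfolding mip_optimal_def
    proof (intro conjI MF allI impI)
      fix lam' sm' sp' \<delta>' \<alpha>' \<gamma>' assume "mip_feasible x y n m s k E lam' sm' sp' \<delta>' \<alpha>' \<gamma>'"
      then have "lp_feasible x y n m s k E lam' sm' sp' \<delta>' \<alpha>' \<gamma>'" by (rule mip_lp)
      then show "eq_obj E \<alpha>' \<gamma>' \<le> eq_obj E \<alpha> \<gamma>" using UB eqV by simp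
    qed
    then show ?thesis using g bin by blast
  qed
  show ?thesis using part1 part2 by blast
qed
end
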